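(* For every positive integer $n$ and every $T\in\mathrm{TSPP}_{n-1}$, the partition $\pi(T)$ is a modified balanced partition of size $n$.
   Context: For a partition $\lambda$ with conjugate $\lambda'$ and Durfee square side $l=\max\{i:\lambda_i\ge i\}$, its Frobenius notation is $(\lambda_1-1,\ldots,\lambda_l-l\mid \lambda'_1-1,\ldots,\lambda'_l-l)$. A modified balanced partition of size $n$ is a partition $\lambda=(\lambda_1,\ldots,\lambda_n)$ with $n$ parts, zero parts allowed, such that $\lambda_1\le n-1$ and $\lambda_i<\lambda'_i$ whenever $\lambda_i\ge i$. A plane partition inside an $(m,m,m)$-box is an array $(T_{i,j})_{1\le i,j\le m}$ of integers in $\{0,\ldots,m\}$ weakly decreasing along rows and columns; equivalently the set $\{(i,j,k):k\le T_{i,j}\}\subseteq\{1,\ldots,m\}^3$. It is totally symmetric if this set is invariant under all permutations of coordinates; $\mathrm{TSPP}_m$ denotes the set of these. For $T\in\mathrm{TSPP}_{n-1}$, $\mathrm{diag}(T)$ is the conjugate of the partition $(T_{1,1},\ldots,T_{n-1,n-1})$; if $\mathrm{diag}(T)=(a_1,\ldots,a_l\mid b_1,\ldots,b_l)$ then $\pi(T)$ is the partition with Frobenius notation $(a_1,\ldots,a_l\mid b_1+1,\ldots,b_l+1)$. *)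

theory Defs
  imports Main
begin

(* Partitions are functions nat => nat, 1-indexed: mu i is the i-th part (i >= 1).
   Convention: mu 0 = 0; parts weakly decreasing; finitely many nonzero parts. *)
definition is_partition :: "(nat \<Rightarrow> nat) \<Rightarrow> bool" where
  "is_partition mu \<longleftrightarrow> mu 0 = 0 \<and> (\<forall>i j. 1 \<le> i \<and> i \<le> j \<longrightarrow> mu j \<le> mu i)
     \<and> (\<exists>N. \<forall>i>N. mu i = 0)"

definition conj_part :: "(nat \<Rightarrow> nat) \<Rightarrow> nat \<Rightarrow> nat" where
  "conj_part mu j = (if j = 0 then 0 else card {i. 1 \<le> i \<and> j \<le> mu i})"

definition durfee :: "(nat \<Rightarrow> nat) \<Rightarrow> nat" where
  "durfee mu = Max (insert 0 {i. 1 \<le> i \<and> i \<le> mu i})"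

definition frobenius :: "(nat \<Rightarrow> nat) \<Rightarrow> nat list \<times> nat list" where
  "frobenius mu = (map (\<lambda>i. mu i - i) [1..<durfee mu + 1],
                   map (\<lambda>i. conj_part mu i - i) [1..<durfee mu + 1])"

definition modified_balanced :: "nat \<Rightarrow> (nat \<Rightarrow> nat) \<Rightarrow> bool" where
  "modified_balanced n lam \<longleftrightarrow> is_partition lam \<and> (\<forall>i>n. lam i = 0) \<and> lam 1 \<le> n - 1
     \<and> (\<forall>i\<ge>1. i \<le> lam i \<longrightarrow> lam i < conj_part lam i)"

(* plane partitions in an (m,m,m)-box: arrays T i j, 1 <= i,j <= m (0 outside) *)
definition pp_set :: "nat \<Rightarrow> (nat \<Rightarrow> nat \<Rightarrow> nat) \<Rightarrow> (nat \<times> nat \<times> nat) set" where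
  "pp_set m T = {(i,j,k). 1 \<le> i \<and> i \<le> m \<and> 1 \<le> j \<and> j \<le> m \<and> 1 \<le> k \<and> k \<le> T i j}"

definition plane_partition_box :: "nat \<Rightarrow> (nat \<Rightarrow> nat \<Rightarrow> nat) \<Rightarrow> bool" where
  "plane_partition_box m T \<longleftrightarrow>
     (\<forall>i j. \<not> (1 \<le> i \<and> i \<le> m \<and> 1 \<le> j \<and> j \<le> m) \<longrightarrow> T i j = 0)
     \<and> (\<forall>i j. T i j \<le> m)
     \<and> (\<forall>i j j'. 1 \<le> i \<and> i \<le> m \<and> 1 \<le> j \<and> j \<le> j' \<and> j' \<le> m \<longrightarrow> T i j' \<le> T i j)
     \<and> (\<forall>i i' j. 1 \<le> i \<and> i \<le> i' \<and> i' \<le> m \<and> 1 \<le> j \<and> j \<le> m \<longrightarrow> T i' j \<le> T i j)"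

definition totally_symmetric :: "(nat \<times> nat \<times> nat) set \<Rightarrow> bool" where
  "totally_symmetric S \<longleftrightarrow> (\<forall>i j k. (i,j,k) \<in> S \<longrightarrow>
      (j,i,k) \<in> S \<and> (i,k,j) \<in> S \<and> (k,j,i) \<in> S \<and> (j,k,i) \<in> S \<and> (k,i,j) \<in> S)"

definition TSPP :: "nat \<Rightarrow> (nat \<Rightarrow> nat \<Rightarrow> nat) set" where
  "TSPP m = {T. plane_partition_box m T \<and> totally_symmetric (pp_set m T)}"

definition diag_part :: "nat \<Rightarrow> (nat \<Rightarrow> nat \<Rightarrow> nat) \<Rightarrow> nat \<Rightarrow> nat" where
  "diag_part n T = conj_part (\<lambda>i. if 1 \<le> i \<and> i \<le> n - 1 then T i i else 0)"

definition pi_part :: "nat \<Rightarrow> (nat \<Rightarrow> nat \<Rightarrow> nat) \<Rightarrow> nat \<Rightarrow> nat" where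
  "pi_part n T = (THE nu. is_partition nu \<and>
      frobenius nu = (fst (frobenius (diag_part n T)), map Suc (snd (frobenius (diag_part n T)))))"

end

theory Submission
  imports Defs
begin

lemma part_mono: "is_partition p \<Longrightarrow> 1 \<le> i \<Longrightarrow> i \<le> j \<Longrightarrow> p j \<le> p i"
  unfolding is_partition_def by blast

lemma part_fin: assumes "is_partition p" "1 \<le> j" shows "finite {i. 1 \<le> i \<and> j \<le> p i}"
proof -
  obtain N where N: "\<forall>i>N. p i = 0" using assms(1) unfolding is_partition_def by blast
  have "{i. 1 \<le> i \<and> j \<le> p i} \<subseteq> {..N}"
    using N assms(2) by (auto simp: not_le[symmetric])
  then show ?thesis using finite_subset by blast
qed

lemma galois: assumes p: "is_partition p" and i: "1 \<le> i" and j: "1 \<le> j"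
  shows "j \<le> p i \<longleftrightarrow> i \<le> conj_part p j"
proof -
  let ?S = "{i. 1 \<le> i \<and> j \<le> p i}"
  have c: "conj_part p j = card ?S" using j by (simp add: conj_part_def)
  have f: "finite ?S" using part_fin[OF p j] .
  show ?thesis
  proof
    assume h: "j \<le> p i"
    have "{1..i} \<subseteq> ?S" using h part_mono[OF p] by (auto intro: le_trans)
    then have "card {1..i} \<le> card ?S" using f card_mono by blast
    then show "i \<le> conj_part p j" using c by simp
  next
    assume h: "i \<le> conj_part p j"
    show "j \<le> p i"
    proof (rule ccontr)
      assume n: "\<not> j \<le> p i"
      have "?S \<subseteq> {1..<i}"
      proof
        fix k assume k: "k \<in> ?S"
        show "k \<in> {1..<i}"
        proof (rule ccontr)
          assume "k \<notin> {1..<i}"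
          then have "i \<le> k" using k by auto
          then have "p k \<le> p i" using part_mono[OF p i] by blast
          then show False using k n by auto
        qed
      qed
      then have "card ?S \<le> card {1..<i}" by (intro card_mono) auto
      then show False using h c i by simp
    qed
  qed
qed

lemma conj_partition: assumes p: "is_partition p" shows "is_partition (conj_part p)"
proof -
  have a: "conj_part p 0 = 0" by (simp add: conj_part_def)
  have b: "\<forall>i j. 1 \<le> i \<and> i \<le> j \<longrightarrow> conj_part p j \<le> conj_part p i"
  proof (intro allI impI)
    fix i j :: nat assume h: "1 \<le> i \<and> i \<le> j"
    have "{k. 1 \<le> k \<and> j \<le> p k} \<subseteq> {k. 1 \<le> k \<and> i \<le> p k}" using h by auto
    then show "conj_part p j \<le> conj_part p i"
      using h part_fin[OF p, of i] card_mono by (simp add: conj_part_def)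
  qed
  have c: "\<forall>j>p 1. conj_part p j = 0"
  proof (intro allI impI)
    fix j assume h: "p 1 < j"
    have e: "{k. 1 \<le> k \<and> j \<le> p k} = {}" using h part_mono[OF p, of 1] by force
    show "conj_part p j = 0" by (subst conj_part_def, subst e) simp
  qed
  show ?thesis unfolding is_partition_def using a b c by blast
qed

lemma conj_conj: assumes p: "is_partition p" shows "conj_part (conj_part p) = p"
proof
  fix j
  show "conj_part (conj_part p) j = p j"
  proof (cases "j = 0")
    case True then show ?thesis using p by (simp add: conj_part_def is_partition_def)
  next
    case False
    then have j: "1 \<le> j" by simp
    have "{i. 1 \<le> i \<and> j \<le> conj_part p i} = {1..p j}"
      using galois[OF p _ j] galois[OF p j] by auto
    then show ?thesis using False by (simp add: conj_part_def)
  qed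
qed

lemma durfee_iff: assumes p: "is_partition p" and i: "1 \<le> i"
  shows "i \<le> durfee p \<longleftrightarrow> i \<le> p i"
proof -
  let ?D = "{i. 1 \<le> i \<and> i \<le> p i}"
  have "?D \<subseteq> {i. 1 \<le> i \<and> 1 \<le> p i}" by auto
  then have f: "finite ?D" using part_fin[OF p, of 1] finite_subset by auto
  show ?thesis
  proof
    assume h: "i \<le> durfee p"
    have "Max (insert 0 ?D) \<in> insert 0 ?D" using f by (intro Max_in) auto
    moreover have "Max (insert 0 ?D) \<noteq> 0" using h i by (simp add: durfee_def)
    ultimately have k: "Max (insert 0 ?D) \<in> ?D" by auto
    then show "i \<le> p i" using h part_mono[OF p i, of "Max (insert 0 ?D)"]
      unfolding durfee_def by auto
  next
    assume "i \<le> p i"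
    then show "i \<le> durfee p" using f i unfolding durfee_def by (intro Max_ge) auto
  qed
qed

lemma below_durfee: assumes p: "is_partition p" and i: "durfee p < i"
  shows "p i \<le> durfee p"
proof (rule ccontr)
  assume "\<not> p i \<le> durfee p"
  then have "Suc (durfee p) \<le> p i" by simp
  also have "p i \<le> p (Suc (durfee p))" using part_mono[OF p, of "Suc (durfee p)" i] i by simp
  finally have "Suc (durfee p) \<le> durfee p" using durfee_iff[OF p, of "Suc (durfee p)"] by simp
  then show False by simp
qed

lemma part_eq_card: assumes p: "is_partition p" and i: "1 \<le> i" and l: "p i \<le> l"
  shows "p i = card {j. 1 \<le> j \<and> j \<le> l \<and> i \<le> conj_part p j}"
proof -
  have "p i = conj_part (conj_part p) i" using conj_conj[OF p] by simp
  also have "\<dots> = card {j. 1 \<le> j \<and> i \<le> conj_part p j}" using i by (simp add: conj_part_def)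
  also have "{j. 1 \<le> j \<and> i \<le> conj_part p j} = {j. 1 \<le> j \<and> j \<le> l \<and> i \<le> conj_part p j}"
    using galois[OF p i] l by (auto intro: le_trans)
  finally show ?thesis .
qed

lemma frob_unique: assumes p: "is_partition p" and q: "is_partition q"
  and e: "frobenius p = frobenius q" shows "p = q"
proof -
  have e1: "map (\<lambda>i. p i - i) [1..<durfee p + 1] = map (\<lambda>i. q i - i) [1..<durfee q + 1]"
    and e2: "map (\<lambda>i. conj_part p i - i) [1..<durfee p + 1] = map (\<lambda>i. conj_part q i - i) [1..<durfee q + 1]"
    using e by (simp_all add: frobenius_def)
  have dl: "durfee p = durfee q" using arg_cong[OF e1, of length] by (simp del: upt_Suc)
  define l where "l = durfee p"
  have A: "\<And>i. 1 \<le> i \<Longrightarrow> i \<le> l \<Longrightarrow> p i = q i \<and> conj_part p i = conj_part q i"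
  proof -
    fix i assume i: "1 \<le> i" "i \<le> l"
    have "p i - i = q i - i" "conj_part p i - i = conj_part q i - i"
      using e1 e2 i dl unfolding l_def map_eq_conv by auto
    moreover have "i \<le> p i" "i \<le> q i" using durfee_iff[OF p i(1)] durfee_iff[OF q i(1)] i dl l_def by auto
    moreover have "i \<le> conj_part p i" "i \<le> conj_part q i"
      using galois[OF p i(1) i(1)] galois[OF q i(1) i(1)] calculation by auto
    ultimately show "p i = q i \<and> conj_part p i = conj_part q i" by linarith
  qed
  show ?thesis
  proof
    fix i
    show "p i = q i"
    proof (cases "i = 0")
      case True then show ?thesis using p q by (simp add: is_partition_def)
    next
      case False
      show ?thesis
      proof (cases "i \<le> l")
        case True then show ?thesis using A False by simp
      next
        case gt: False
        have "p i = card {j. 1 \<le> j \<and> j \<le> l \<and> i \<le> conj_part p j}"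
          using part_eq_card[OF p, of i l] below_durfee[OF p, of i] gt False l_def by simp
        also have "{j. 1 \<le> j \<and> j \<le> l \<and> i \<le> conj_part p j} = {j. 1 \<le> j \<and> j \<le> l \<and> i \<le> conj_part q j}"
          using A by auto
        also have "card \<dots> = q i"
          using part_eq_card[OF q, of i l] below_durfee[OF q, of i] gt False l_def dl by simp
        finally show ?thesis .
      qed
    qed
  qed
qed


theorem mainTheorem6:
  fixes n :: nat and T :: "nat \<Rightarrow> nat \<Rightarrow> nat"
  assumes "n \<ge> 1" and "T \<in> TSPP (n - 1)"
  shows "modified_balanced n (pi_part n T)"
proof -
  define m where "m = n - 1"
  have box: "plane_partition_box m T" and ts: "totally_symmetric (pp_set m T)"
    using assms(2) by (simp_all add: TSPP_def m_def)
  have Tle: "\<And>i j. T i j \<le> m" using box by (simp add: plane_partition_box_def)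
  have row: "\<And>i j j'. 1 \<le> i \<Longrightarrow> i \<le> m \<Longrightarrow> 1 \<le> j \<Longrightarrow> j \<le> j' \<Longrightarrow> j' \<le> m \<Longrightarrow> T i j' \<le> T i j"
    using box unfolding plane_partition_box_def by blast
  have col: "\<And>i i' j. 1 \<le> i \<Longrightarrow> i \<le> i' \<Longrightarrow> i' \<le> m \<Longrightarrow> 1 \<le> j \<Longrightarrow> j \<le> m \<Longrightarrow> T i' j \<le> T i j"
    using box unfolding plane_partition_box_def by blast
  define d where "d = (\<lambda>i. if 1 \<le> i \<and> i \<le> m then T i i else 0)"
  have dpart: "is_partition d"
    unfolding is_partition_def
  proof (intro conjI allI impI)
    show "d 0 = 0" by (simp add: d_def)
    fix i j :: nat assume h: "1 \<le> i \<and> i \<le> j"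
    show "d j \<le> d i"
    proof (cases "j \<le> m")
      case True
      have "T j j \<le> T i j" using col[of i j j] h True by simp
      also have "\<dots> \<le> T i i" using row[of i i j] h True by simp
      finally show ?thesis using h True by (simp add: d_def)
    qed (simp add: d_def)
  next
    show "\<exists>N. \<forall>i>N. d i = 0" by (rule exI[of _ m]) (simp add: d_def)
  qed
  have dle: "\<And>j. d j \<le> m" using Tle by (simp add: d_def)
  define mu where "mu = conj_part d"
  have diag: "diag_part n T = mu" by (simp add: diag_part_def mu_def d_def m_def)
  have mupart: "is_partition mu" using conj_partition[OF dpart] mu_def by simp
  have cmu: "conj_part mu = d" using conj_conj[OF dpart] mu_def by simp
  have mule: "\<And>i. mu i \<le> m"
  proof -
    fix i
    show "mu i \<le> m"
    proof (cases "i = 0")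
      case False
      have "{k. 1 \<le> k \<and> i \<le> d k} \<subseteq> {1..m}" using False by (auto simp: d_def split: if_splits)
      then have "card {k. 1 \<le> k \<and> i \<le> d k} \<le> card {1..m}" by (intro card_mono) auto
      then show ?thesis using False by (simp add: mu_def conj_part_def)
    qed (simp add: mu_def conj_part_def)
  qed
  define l where "l = durfee mu"
  have gd: "\<And>i k. 1 \<le> i \<Longrightarrow> 1 \<le> k \<Longrightarrow> i \<le> d k \<longleftrightarrow> k \<le> mu i"
    using galois[OF dpart] mu_def by simp
  have inl: "\<And>i. 1 \<le> i \<Longrightarrow> i \<le> l \<Longrightarrow> i \<le> mu i"
    using durfee_iff[OF mupart] l_def by simp
  have lm: "l \<le> m"
  proof (cases "l = 0")
    case False then show ?thesis using inl[of l] mule[of l] by simp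
  qed simp
  have ld: "\<And>j. 1 \<le> j \<Longrightarrow> j \<le> l \<Longrightarrow> l \<le> d j"
  proof -
    fix j assume j: "1 \<le> j" "j \<le> l"
    have "l \<le> mu l" using inl[of l] j by simp
    then show "l \<le> d j" using gd[of l j] j by simp
  qed
  have nl1: "\<not> Suc l \<le> mu (Suc l)" using durfee_iff[OF mupart, of "Suc l"] l_def by simp
  define e where "e = (\<lambda>j. if 1 \<le> j \<and> j \<le> l then d j + 1 else d j)"
  have epart: "is_partition e"
    unfolding is_partition_def
  proof (intro conjI allI impI)
    show "e 0 = 0" using dpart by (simp add: e_def is_partition_def)
    fix i j :: nat assume h: "1 \<le> i \<and> i \<le> j"
    have dm: "d j \<le> d i" using part_mono[OF dpart] h by blast
    show "e j \<le> e i"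
    proof (cases "j \<le> l")
      case True then show ?thesis using dm h by (simp add: e_def)
    next
      case False
      have "d j \<le> l"
      proof (rule ccontr)
        assume "\<not> d j \<le> l"
        then have "Suc l \<le> d j" by simp
        then have "j \<le> mu (Suc l)" using gd[of "Suc l" j] h by simp
        then show False using nl1 False by simp
      qed
      then show ?thesis using dm h False ld[of i] by (auto simp: e_def)
    qed
  next
    obtain N where "\<forall>i>N. d i = 0" using dpart unfolding is_partition_def by blast
    then show "\<exists>N. \<forall>i>N. e i = 0" by (intro exI[of _ "max N l"]) (simp add: e_def)
  qed
  define nu where "nu = conj_part e"
  have nupart: "is_partition nu" using conj_partition[OF epart] nu_def by simp
  have cnu: "conj_part nu = e" using conj_conj[OF epart] nu_def by simp
  have nu_mu: "\<And>i. 1 \<le> i \<Longrightarrow> i \<le> l \<Longrightarrow> nu i = mu i"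
  proof -
    fix i assume i: "1 \<le> i" "i \<le> l"
    have "{j. 1 \<le> j \<and> i \<le> e j} = {j. 1 \<le> j \<and> i \<le> d j}"
      using ld i by (auto simp: e_def intro: le_trans)
    then show "nu i = mu i" using i by (simp add: nu_def mu_def conj_part_def)
  qed
  have nul1: "nu (Suc l) \<le> l"
  proof -
    have "{j. 1 \<le> j \<and> Suc l \<le> e j} \<subseteq> {1..l}"
    proof
      fix j assume j: "j \<in> {j. 1 \<le> j \<and> Suc l \<le> e j}"
      show "j \<in> {1..l}"
      proof (rule ccontr)
        assume "j \<notin> {1..l}"
        then have "l < j" "Suc l \<le> d j" using j by (auto simp: e_def)
        then show False using gd[of "Suc l" j] nl1 by simp
      qed
    qed
    then have "card {j. 1 \<le> j \<and> Suc l \<le> e j} \<le> card {1..l}" by (intro card_mono) auto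
    then show ?thesis by (simp add: nu_def conj_part_def)
  qed
  have dnu: "durfee nu = l"
  proof -
    have "l \<le> durfee nu"
    proof (cases "l = 0")
      case False then show ?thesis using durfee_iff[OF nupart, of l] nu_mu[of l] inl[of l] by simp
    qed simp
    moreover have "\<not> Suc l \<le> durfee nu" using durfee_iff[OF nupart, of "Suc l"] nul1 by simp
    ultimately show ?thesis by simp
  qed
  have ild: "\<And>i. 1 \<le> i \<Longrightarrow> i \<le> l \<Longrightarrow> i \<le> d i" using gd inl by simp
  have frob: "frobenius nu = (fst (frobenius (diag_part n T)), map Suc (snd (frobenius (diag_part n T))))"
    unfolding diag frobenius_def dnu cmu cnu l_def[symmetric]
    using nu_mu ild by (auto simp: e_def map_eq_conv Suc_diff_le)
  have pi: "pi_part n T = nu"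
    unfolding pi_part_def
  proof (rule the_equality)
    show "is_partition nu \<and> frobenius nu = (fst (frobenius (diag_part n T)), map Suc (snd (frobenius (diag_part n T))))"
      using nupart frob by simp
    fix nu' assume "is_partition nu' \<and> frobenius nu' = (fst (frobenius (diag_part n T)), map Suc (snd (frobenius (diag_part n T))))"
    then show "nu' = nu" using frob_unique[OF _ nupart] frob by metis
  qed
  have key: "\<And>i. 1 \<le> i \<Longrightarrow> i \<le> l \<Longrightarrow> mu i \<le> d i"
  proof -
    fix i assume i: "1 \<le> i" "i \<le> l"
    define k where "k = mu i"
    have ik: "i \<le> k" using inl i k_def by simp
    have km: "k \<le> m" using mule k_def by simp
    have "i \<le> d k" using gd[of i k] i ik k_def by simp
    then have "i \<le> T k k" using ik km i by (simp add: d_def split: if_splits)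
    then have "(k, k, i) \<in> pp_set m T" using ik km i by (simp add: pp_set_def)
    then have "(i, k, k) \<in> pp_set m T" using ts unfolding totally_symmetric_def by blast
    then have "k \<le> T i k" by (simp add: pp_set_def)
    also have "\<dots> \<le> T i i" using row[of i i k] i ik km by simp
    finally show "mu i \<le> d i" using i ik km k_def by (simp add: d_def)
  qed
  show ?thesis
    unfolding pi modified_balanced_def
  proof (intro conjI allI impI)
    show "is_partition nu" by (rule nupart)
  next
    fix i assume i: "n < i"
    have "{j. 1 \<le> j \<and> i \<le> e j} = {}"
    proof -
      have "\<And>j. e j \<le> n"
      proof -
        fix j
        have "e j \<le> d j + 1" by (simp add: e_def)
        also have "\<dots> \<le> m + 1" using dle[of j] by simp
        finally show "e j \<le> n" using assms(1) m_def by simp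
      qed
      then have "\<And>j. e j < i" using i le_less_trans by blast
      then show ?thesis by (simp add: not_le)
    qed
    then show "nu i = 0" unfolding nu_def by (subst conj_part_def, simp only: if_split) simp
  next
    have "{j. 1 \<le> j \<and> 1 \<le> e j} \<subseteq> {1..m}"
    proof
      fix j assume j: "j \<in> {j. 1 \<le> j \<and> 1 \<le> e j}"
      show "j \<in> {1..m}"
      proof (cases "j \<le> l")
        case True then show ?thesis using j lm by simp
      next
        case False then show ?thesis using j by (auto simp: e_def d_def split: if_splits)
      qed
    qed
    then have "card {j. 1 \<le> j \<and> 1 \<le> e j} \<le> card {1..m}" by (intro card_mono) auto
    then show "nu 1 \<le> n - 1" by (simp add: nu_def conj_part_def m_def)
  next
    fix i :: nat assume i: "1 \<le> i" and h: "i \<le> nu i"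
    have il: "i \<le> l" using durfee_iff[OF nupart i] h dnu by simp
    show "nu i < conj_part nu i"
      using nu_mu[OF i il] key[OF i il] cnu i il by (simp add: e_def)
  qed
qed

end
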